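(* For every integer $k\ge 1$, the complete multipartite graph $K_{1*k,2*(k-1)}$ (with $k$ parts of size $1$ and $k-1$ parts of size $2$) has m-number $m(K_{1*k,2*(k-1)})=k+1$.
   Context: All graphs are finite, simple and undirected. A list assignment $L$ for a graph $G$ assigns to each vertex $v$ a set $L(v)$ of colors; an $L$-coloring is a proper vertex coloring $c$ of $G$ with $c(v)\in L(v)$ for every vertex $v$. A $k$-list assignment is a list assignment with $|L(v)|=k$ for all $v$. $G$ is uniquely $k$-list colorable (U$k$LC) if there exists a $k$-list assignment $L$ such that $G$ has exactly one $L$-coloring. $G$ has property $M(k)$ if it is not U$k$LC, i.e. for every $k$-list assignment $L$, $G$ has either no $L$-coloring or at least two $L$-colorings. The m-number $m(G)$ is the least integer $k\ge 1$ such that $G$ has property $M(k)$. (Every U$k$LC graph is also U$(k-1)$LC, so $G$ is U$k$LC iff $k<m(G)$.) *)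

theory Defs
  imports Main
begin

text \<open>A graph is given by a finite vertex set V and a symmetric irreflexive
  adjacency relation E. Colors are natural numbers.\<close>

definition is_L_coloring :: "'a set \<Rightarrow> ('a \<Rightarrow> 'a \<Rightarrow> bool) \<Rightarrow> ('a \<Rightarrow> nat set) \<Rightarrow> ('a \<Rightarrow> nat) \<Rightarrow> bool" where
  "is_L_coloring V E L c \<longleftrightarrow>
     (\<forall>v\<in>V. c v \<in> L v) \<and> (\<forall>u\<in>V. \<forall>v\<in>V. E u v \<longrightarrow> c u \<noteq> c v)"

definition L_colorings :: "'a set \<Rightarrow> ('a \<Rightarrow> 'a \<Rightarrow> bool) \<Rightarrow> ('a \<Rightarrow> nat set) \<Rightarrow> ('a \<Rightarrow> nat) set" where
  "L_colorings V E L = {c. is_L_coloring V E L c \<and> (\<forall>v. v \<notin> V \<longrightarrow> c v = undefined)}"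

definition uniquely_k_list_colorable :: "'a set \<Rightarrow> ('a \<Rightarrow> 'a \<Rightarrow> bool) \<Rightarrow> nat \<Rightarrow> bool" where
  "uniquely_k_list_colorable V E k \<longleftrightarrow>
     (\<exists>L. (\<forall>v\<in>V. card (L v) = k) \<and> card (L_colorings V E L) = 1)"

definition has_M :: "'a set \<Rightarrow> ('a \<Rightarrow> 'a \<Rightarrow> bool) \<Rightarrow> nat \<Rightarrow> bool" where
  "has_M V E k \<longleftrightarrow> \<not> uniquely_k_list_colorable V E k"

definition m_number :: "'a set \<Rightarrow> ('a \<Rightarrow> 'a \<Rightarrow> bool) \<Rightarrow> nat" where
  "m_number V E = (LEAST k. k \<ge> 1 \<and> has_M V E k)"

text \<open>Complete multipartite graph with part sizes given by a list s:
  vertex (i,j) is the j-th vertex of part i.\<close>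
definition cmp_V :: "nat list \<Rightarrow> (nat \<times> nat) set" where
  "cmp_V s = {(i,j). i < length s \<and> j < s ! i}"

definition cmp_E :: "(nat \<times> nat) \<Rightarrow> (nat \<times> nat) \<Rightarrow> bool" where
  "cmp_E x y \<longleftrightarrow> fst x \<noteq> fst y"

definition K_parts :: "nat \<Rightarrow> nat list" where
  "K_parts k = replicate k 1 @ replicate (k - 1) 2"

end

theory Submission
  imports Defs
begin

lemma memV: assumes "k \<ge> 1" shows "(v \<in> cmp_V (K_parts k)) = ((fst v < k \<and> snd v = 0) \<or> (k \<le> fst v \<and> fst v < 2*k-1 \<and> snd v < 2))"
  using assms by (cases v) (auto simp: cmp_V_def K_parts_def nth_append)

lemma finV: "finite (cmp_V (K_parts k))"
proof -
  have "cmp_V (K_parts k) \<subseteq> {..<length (K_parts k)} \<times> {..<2}"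
    by (auto simp: cmp_V_def K_parts_def nth_append split: if_splits)
  then show ?thesis by (rule finite_subset) auto
qed

lemma mono_U:
  assumes "finite V" "j \<ge> 1" "uniquely_k_list_colorable V E (Suc j)"
  shows "uniquely_k_list_colorable V E j"
proof -
  obtain L where L: "\<forall>v\<in>V. card (L v) = Suc j" "card (L_colorings V E L) = 1"
    using assms(3) unfolding uniquely_k_list_colorable_def by blast
  then obtain c where c: "L_colorings V E L = {c}" by (meson card_1_singletonE)
  have cL: "is_L_coloring V E L c" using c unfolding L_colorings_def by blast
  have "\<forall>v\<in>V. \<exists>S. S \<subseteq> L v - {c v} \<and> card S = j - 1 \<and> finite S"
  proof
    fix v assume v: "v \<in> V"
    have fin: "finite (L v)" using L(1) v by (metis card.infinite nat.distinct(1))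
    have "c v \<in> L v" using cL v unfolding is_L_coloring_def by blast
    then have "card (L v - {c v}) = j" using L(1) v fin by simp
    then show "\<exists>S. S \<subseteq> L v - {c v} \<and> card S = j - 1 \<and> finite S"
      using obtain_subset_with_card_n[of "j-1" "L v - {c v}"] by (metis diff_le_self)
  qed
  then obtain S where S: "\<forall>v\<in>V. S v \<subseteq> L v - {c v} \<and> card (S v) = j - 1 \<and> finite (S v)"
    by metis
  define L' where "L' v = insert (c v) (S v)" for v
  have card': "\<forall>v\<in>V. card (L' v) = j"
  proof
    fix v assume v: "v \<in> V"
    then have "c v \<notin> S v" "finite (S v)" "card (S v) = j - 1" using S by auto
    then show "card (L' v) = j" unfolding L'_def using assms(2) by simp
  qed
  have sub: "L_colorings V E L' \<subseteq> L_colorings V E L"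
    using S cL unfolding L_colorings_def is_L_coloring_def L'_def by fastforce
  have "c \<in> L_colorings V E L'"
    using c unfolding L_colorings_def is_L_coloring_def L'_def by auto
  then have "L_colorings V E L' = {c}" using sub c by blast
  then show ?thesis unfolding uniquely_k_list_colorable_def using card' by (intro exI[of _ L']) auto
qed
lemma closed_cycle:
  assumes "finite N" "N \<noteq> {}" "\<forall>v\<in>N. f v \<in> N"
  shows "\<exists>C. C \<subseteq> N \<and> C \<noteq> {} \<and> f ` C = C"
proof -
  let ?P = "\<lambda>n. \<exists>C. C \<subseteq> N \<and> C \<noteq> {} \<and> f ` C \<subseteq> C \<and> card C = n"
  have "?P (card N)" using assms by blast
  then have "?P (LEAST n. ?P n)" by (rule LeastI)
  then obtain C where C: "C \<subseteq> N" "C \<noteq> {}" "f ` C \<subseteq> C" "card C = (LEAST n. ?P n)" by blast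
  have finC: "finite C" using C(1) assms(1) finite_subset by blast
  have "?P (card (f ` C))" using C by (intro exI[of _ "f ` C"]) auto
  then have "card C \<le> card (f ` C)" using C(4) by (simp add: Least_le)
  then have "f ` C = C" using C(3) finC by (meson card_seteq)
  then show ?thesis using C by blast
qed

lemma not_unique_if_cycle:
  assumes c: "c \<in> L_colorings V E L" and irr: "\<forall>x. \<not> E x x" and CV: "C \<subseteq> V" and Cne: "C \<noteq> {}"
    and fC: "f ` C = C" and fL: "\<forall>v\<in>C. c (f v) \<in> L v \<and> c (f v) \<noteq> c v"
    and uniq: "\<forall>v\<in>C. \<forall>w\<in>V. w \<noteq> v \<longrightarrow> c w \<noteq> c v" and finC: "finite C"
  shows "\<exists>c'. c' \<in> L_colorings V E L \<and> c' \<noteq> c"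
proof -
  define p where "p x = (if x \<in> C then f x else x)" for x
  define c' where "c' x = c (p x)" for x
  have inj: "inj_on f C" using fC finC by (simp add: eq_card_imp_inj_on)
  have cc: "is_L_coloring V E L c" "\<forall>v. v \<notin> V \<longrightarrow> c v = undefined"
    using c unfolding L_colorings_def by auto
  have pV: "p x \<in> V" if "x \<in> V" for x using that fC CV unfolding p_def by auto
  have pinj: "p u = p w \<Longrightarrow> u = w" for u w
    using inj fC unfolding p_def by (auto simp: inj_on_def split: if_splits)
  have "c' \<in> L_colorings V E L"
    unfolding L_colorings_def is_L_coloring_def
  proof (intro CollectI conjI ballI allI impI)
    fix v assume "v \<in> V" then show "c' v \<in> L v"
      using fL cc(1) unfolding c'_def p_def is_L_coloring_def by auto
  next
    fix v assume "v \<notin> V" then show "c' v = undefined"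
      using CV cc(2) unfolding c'_def p_def by auto
  next
    fix u w assume u: "u \<in> V" and w: "w \<in> V" and E: "E u w"
    show "c' u \<noteq> c' w"
    proof
      assume eq: "c' u = c' w"
      show False
      proof (cases "p u = p w")
        case True then have "u = w" by (rule pinj)
        then show False using E irr by blast
      next
        case False
        have "u \<notin> C"
        proof
          assume "u \<in> C" then have "p u \<in> C" unfolding p_def using fC by auto
          then show False using uniq pV[OF w] False eq unfolding c'_def by metis
        qed
        moreover have "w \<notin> C"
        proof
          assume "w \<in> C" then have "p w \<in> C" unfolding p_def using fC by auto
          then show False using uniq pV[OF u] False eq unfolding c'_def by metis
        qed
        ultimately show False using eq cc(1) u w E unfolding c'_def p_def is_L_coloring_def by auto
      qed
    qed
  qed
  moreover obtain v where "v \<in> C" using Cne by blast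
  then have "c' v \<noteq> c v" using fL unfolding c'_def p_def by auto
  ultimately show ?thesis by blast
qed
lemma hasM:
  assumes k: "k \<ge> 1"
  shows "has_M (cmp_V (K_parts k)) cmp_E (k+1)"
  unfolding has_M_def uniquely_k_list_colorable_def
proof
  let ?V = "cmp_V (K_parts k)"
  assume "\<exists>L. (\<forall>v\<in>?V. card (L v) = k + 1) \<and> card (L_colorings ?V cmp_E L) = 1"
  then obtain L where L: "\<forall>v\<in>?V. card (L v) = k+1" "card (L_colorings ?V cmp_E L) = 1" by blast
  then obtain c where c: "L_colorings ?V cmp_E L = {c}" by (meson card_1_singletonE)
  have cc: "is_L_coloring ?V cmp_E L c" "\<forall>v. v \<notin> ?V \<longrightarrow> c v = undefined"
    using c unfolding L_colorings_def by auto
  define N where "N = {v\<in>?V. \<forall>w\<in>?V. w \<noteq> v \<longrightarrow> c w \<noteq> c v}"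
  have NV: "N \<subseteq> ?V" unfolding N_def by auto
  have finN: "finite N" using NV finV finite_subset by blast
  have "(0,0) \<in> N"
  proof -
    have "(0,0) \<in> ?V" using memV[OF k] k by auto
    moreover have "c w \<noteq> c (0,0)" if "w \<in> ?V" "w \<noteq> (0,0)" for w
    proof
      assume "c w = c (0,0)"
      then have "\<not> cmp_E w (0,0)" using cc(1) that `(0,0) \<in> ?V` unfolding is_L_coloring_def by metis
      then have "fst w = 0" unfolding cmp_E_def by simp
      then show False using that memV[OF k, of w] by (cases w) auto
    qed
    ultimately show ?thesis unfolding N_def by blast
  qed
  then have Nne: "N \<noteq> {}" by blast
  have A: "\<exists>w\<in>N. w \<noteq> v \<and> c w \<in> L v" if vN: "v \<in> N" for v
  proof (rule ccontr)
    assume H: "\<not> (\<exists>w\<in>N. w \<noteq> v \<and> c w \<in> L v)"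
    have vV: "v \<in> ?V" using vN NV by blast
    have cvL: "c v \<in> L v" using cc(1) vV unfolding is_L_coloring_def by blast
    have finL: "finite (L v)" using L(1) vV by (metis card.infinite add_is_0 one_neq_zero)
    have s1: "L v - {c v} \<subseteq> c ` (?V - N)"
    proof
      fix x assume x: "x \<in> L v - {c v}"
      have "\<exists>w\<in>?V. cmp_E v w \<and> c w = x"
      proof (rule ccontr)
        assume nw: "\<not> (\<exists>w\<in>?V. cmp_E v w \<and> c w = x)"
        have "c(v := x) \<in> L_colorings ?V cmp_E L"
          using cc x nw vV unfolding L_colorings_def is_L_coloring_def cmp_E_def
          by (auto simp: eq_commute)
        then have "c(v := x) = c" using c by blast
        then show False using x by (metis fun_upd_same DiffD2 singletonI)
      qed
      then obtain w where w: "w \<in> ?V" "cmp_E v w" "c w = x" by blast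
      have "w \<noteq> v" using w(2) unfolding cmp_E_def by auto
      then have "w \<notin> N" using H w x by blast
      then show "x \<in> c ` (?V - N)" using w by blast
    qed
    have s2: "c ` (?V - N) \<subseteq> (\<lambda>i. c (i,0)) ` {k..<2*k-1}"
    proof
      fix y assume "y \<in> c ` (?V - N)"
      then obtain w where w: "w \<in> ?V" "w \<notin> N" "y = c w" by blast
      then obtain w' where w': "w' \<in> ?V" "w' \<noteq> w" "c w' = c w" unfolding N_def by blast
      then have "\<not> cmp_E w w'" using cc(1) w unfolding is_L_coloring_def by metis
      then have fe: "fst w = fst w'" unfolding cmp_E_def by simp
      obtain i j where ij: "w = (i,j)" by (cases w)
      obtain j' where ij': "w' = (i,j')" using fe ij by (cases w') auto
      have "k \<le> i \<and> i < 2*k-1 \<and> (c w = c (i,0))"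
        using w(1) w'(1) w'(2) w'(3) memV[OF k, of w] memV[OF k, of w'] ij ij'
        by (cases j; cases j') auto
      then show "y \<in> (\<lambda>i. c (i,0)) ` {k..<2*k-1}" using w(3) by auto
    qed
    have "k = card (L v - {c v})" using L(1) vV cvL finL by simp
    also have "\<dots> \<le> card ((\<lambda>i. c (i,0)) ` {k..<2*k-1})"
      using s1 s2 by (intro card_mono) auto
    also have "\<dots> \<le> card {k..<2*k-1}" by (rule card_image_le) auto
    finally show False using k by simp
  qed
  define f where "f v = (SOME w. w \<in> N \<and> w \<noteq> v \<and> c w \<in> L v)" for v
  have f: "f v \<in> N \<and> f v \<noteq> v \<and> c (f v) \<in> L v" if "v \<in> N" for v
    using A[OF that] unfolding f_def by (rule someI2_bex) auto
  have fN: "\<forall>v\<in>N. f v \<in> N" using f by blast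
  obtain C where C: "C \<subseteq> N" "C \<noteq> {}" "f ` C = C" using closed_cycle[OF finN Nne fN] by blast
  have "\<exists>c'. c' \<in> L_colorings ?V cmp_E L \<and> c' \<noteq> c"
  proof (rule not_unique_if_cycle[where C=C and f=f])
    show "c \<in> L_colorings ?V cmp_E L" using c by blast
    show "\<forall>x. \<not> cmp_E x x" unfolding cmp_E_def by simp
    show "C \<subseteq> ?V" using C NV by blast
    show "C \<noteq> {}" "f ` C = C" using C by auto
    show "finite C" using C finN finite_subset by blast
    show "\<forall>v\<in>C. \<forall>w\<in>?V. w \<noteq> v \<longrightarrow> c w \<noteq> c v" using C unfolding N_def by blast
    show "\<forall>v\<in>C. c (f v) \<in> L v \<and> c (f v) \<noteq> c v"
    proof
      fix v assume "v \<in> C"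
      then have "v \<in> N" "f v \<in> N" "f v \<noteq> v" "c (f v) \<in> L v" using C f[of v] by auto
      then show "c (f v) \<in> L v \<and> c (f v) \<noteq> c v" unfolding N_def by blast
    qed
  qed
  then show False using c by blast
qed
definition Lk :: "nat \<Rightarrow> nat \<times> nat \<Rightarrow> nat set" where
  "Lk k v = (if fst v < k then {0..fst v} \<union> {k + fst v..2*k-2}
             else if snd v = 0 then {fst v + 1 - k..fst v}
             else insert (fst v) ({0..fst v - k} \<union> {fst v + 1..2*k-2}))"

lemma Lk_card:
  assumes k: "k \<ge> 1" and v: "v \<in> cmp_V (K_parts k)"
  shows "card (Lk k v) = k"
proof -
  obtain i j where ij: "v = (i,j)" by (cases v)
  show ?thesis
  proof (cases "i < k")
    case True
    have "card ({0..i} \<union> {k + i..2*k-2}) = card {0..i} + card {k+i..2*k-2}"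
      using True k by (intro card_Un_disjoint) auto
    also have "\<dots> = k" using True k by simp
    finally show ?thesis using True ij by (simp add: Lk_def)
  next
    case False
    then have i: "k \<le> i" "i < 2*k-1" "j < 2" using memV[OF k, of v] v ij by auto
    show ?thesis
    proof (cases "j = 0")
      case True then show ?thesis using i ij by (simp add: Lk_def)
    next
      case False
      have "card ({0..i - k} \<union> {i + 1..2*k-2}) = card {0..i-k} + card {i+1..2*k-2}"
        by (rule card_Un_disjoint) auto
      also have "\<dots> = k - 1" using i by simp
      finally show ?thesis using i ij False k by (simp add: Lk_def)
    qed
  qed
qed

lemma Lk_sub: "k \<ge> 1 \<Longrightarrow> v \<in> cmp_V (K_parts k) \<Longrightarrow> Lk k v \<subseteq> {..<2*k-1}"
  using memV[of k v] by (auto simp: Lk_def)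

definition c0 :: "nat \<Rightarrow> nat \<times> nat \<Rightarrow> nat" where
  "c0 k v = (if v \<in> cmp_V (K_parts k) then fst v else undefined)"

lemma c0_col: assumes k: "k \<ge> 1" shows "c0 k \<in> L_colorings (cmp_V (K_parts k)) cmp_E (Lk k)"
  using memV[OF k]
  unfolding L_colorings_def is_L_coloring_def c0_def cmp_E_def Lk_def by auto

lemma c0_unique:
  assumes k: "k \<ge> 1" and d: "d \<in> L_colorings (cmp_V (K_parts k)) cmp_E (Lk k)"
  shows "d = c0 k"
proof -
  let ?V = "cmp_V (K_parts k)"
  let ?n = "2*k-1"
  have dd: "\<forall>v\<in>?V. d v \<in> Lk k v" "\<forall>u\<in>?V. \<forall>v\<in>?V. fst u \<noteq> fst v \<longrightarrow> d u \<noteq> d v"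
    "\<forall>v. v \<notin> ?V \<longrightarrow> d v = undefined"
    using d unfolding L_colorings_def is_L_coloring_def cmp_E_def by auto
  define g where "g i = d (i,0)" for i
  have i0V: "(i,0) \<in> ?V" if "i < ?n" for i using that memV[OF k, of "(i,0)"] by auto
  have dlt: "d v < ?n" if "v \<in> ?V" for v using Lk_sub[OF k that] dd(1) that by auto
  have inj: "inj_on g {..<?n}"
  proof (rule inj_onI)
    fix x y assume "x \<in> {..<?n}" "y \<in> {..<?n}" "g x = g y"
    then show "x = y" using dd(2) i0V[of x] i0V[of y] unfolding g_def by fastforce
  qed
  have gsub: "g ` {..<?n} \<subseteq> {..<?n}" using dlt i0V unfolding g_def by auto
  have surj: "g ` {..<?n} = {..<?n}" using endo_inj_surj[OF _ gsub inj] by simp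
  have pair: "d (i,0) = i \<and> d (i,1) = i" if i: "k \<le> i" "i < ?n" for i
  proof -
    have i1V: "(i,1) \<in> ?V" using memV[OF k, of "(i,1)"] i by auto
    then have "d (i,1) \<in> g ` {..<?n}" using surj dlt by auto
    then obtain i' where i': "i' < ?n" "d (i,1) = d (i',0)" unfolding g_def by auto
    have "i' = i" using dd(2) i1V i0V[OF i'(1)] i' by fastforce
    then have "d (i,1) = d (i,0)" using i' by simp
    moreover have "d (i,0) \<in> Lk k (i,0)" "d (i,1) \<in> Lk k (i,1)" using dd(1) i1V i0V[OF i(2)] by auto
    ultimately show ?thesis using i by (auto simp: Lk_def)
  qed
  have single: "i < k \<longrightarrow> d (i,0) = i" for i
  proof (induction i rule: less_induct)
    case (less i)
    show ?case
    proof
      assume ik: "i < k"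
      have iV: "(i,0) \<in> ?V" using i0V ik by simp
      have "d (i,0) \<in> Lk k (i,0)" using dd(1) iV by blast
      then have mem: "d (i,0) \<le> i \<or> (k + i \<le> d (i,0) \<and> d (i,0) \<le> 2*k-2)" using ik by (auto simp: Lk_def)
      show "d (i,0) = i"
      proof (rule ccontr)
        assume ne: "d (i,0) \<noteq> i"
        then obtain p where p: "p < ?n" "p \<noteq> i" "d (p,0) = d (i,0)"
        proof (cases "d (i,0) < i")
          case True
          then show ?thesis using that[of "d (i,0)"] less[of "d (i,0)"] ik by auto
        next
          case False
          then have "k \<le> d (i,0)" "d (i,0) < ?n" using mem ne by auto
          then show ?thesis using that[of "d (i,0)"] pair[of "d (i,0)"] ik by auto
        qed
        then show False using dd(2) iV i0V[OF p(1)] by fastforce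
      qed
    qed
  qed
  show ?thesis
  proof
    fix v
    show "d v = c0 k v"
    proof (cases "v \<in> ?V")
      case True
      obtain i j where ij: "v = (i,j)" by (cases v)
      show ?thesis
      proof (cases "i < k")
        case True then show ?thesis using single ij memV[OF k, of v] `v \<in> ?V` by (auto simp: c0_def)
      next
        case False
        then have "k \<le> i" "i < ?n" "j = 0 \<or> j = 1" using memV[OF k, of v] `v \<in> ?V` ij by auto
        then show ?thesis using pair ij `v \<in> ?V` by (auto simp: c0_def)
      qed
    next
      case False then show ?thesis using dd(3) unfolding c0_def by metis
    qed
  qed
qed

lemma UkLC: assumes k: "k \<ge> 1" shows "uniquely_k_list_colorable (cmp_V (K_parts k)) cmp_E k"
proof -
  have "L_colorings (cmp_V (K_parts k)) cmp_E (Lk k) = {c0 k}"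
    using c0_col[OF k] c0_unique[OF k] by blast
  then show ?thesis unfolding uniquely_k_list_colorable_def using Lk_card[OF k]
    by (intro exI[of _ "Lk k"]) auto
qed
lemma down:
  assumes k: "k \<ge> 1"
  shows "i \<le> k - 1 \<Longrightarrow> uniquely_k_list_colorable (cmp_V (K_parts k)) cmp_E (k - i)"
proof (induction i)
  case 0 then show ?case using UkLC[OF k] by simp
next
  case (Suc i)
  have e: "Suc (k - Suc i) = k - i" using Suc.prems by simp
  have u: "uniquely_k_list_colorable (cmp_V (K_parts k)) cmp_E (Suc (k - Suc i))"
    using Suc e by simp
  show ?case using mono_U[OF finV _ u] Suc.prems by simp
qed

theorem mainTheorem15:
  fixes k :: nat
  assumes "k \<ge> 1"
  shows "m_number (cmp_V (K_parts k)) cmp_E = k + 1"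
  unfolding m_number_def
proof (rule Least_equality)
  show "1 \<le> k + 1 \<and> has_M (cmp_V (K_parts k)) cmp_E (k + 1)" using hasM[OF assms] by simp
next
  fix y assume y: "1 \<le> y \<and> has_M (cmp_V (K_parts k)) cmp_E y"
  show "k + 1 \<le> y"
  proof (rule ccontr)
    assume "\<not> k + 1 \<le> y"
    then have "k - y \<le> k - 1" "k - (k - y) = y" using y by auto
    then show False using down[OF assms, of "k - y"] y unfolding has_M_def by simp
  qed
qed

end
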